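(* Let $\hat T$ be a TCD map on a BTB graph $G$ into $\mathbb{CP}^{d+1}$, let $s$ be a resplit, and let $\pi_U$ be a central projection from a point $U\in\mathbb{CP}^{d+1}$ to $\mathbb{CP}^d$. Then the resplit commutes with central projection: whenever both sides are defined, $\mu_s(\pi_U\circ\hat T)=\pi_U\circ\mu_s(\hat T)$, where $\mu_s$ denotes the resplit of TCD maps. Equivalently, $\mu_s\circ\pi_U=\pi_U\circ\mu_s$ as rational maps from rank-$(d+1)$ TCD maps on $G$ to TCD maps into $\mathbb{CP}^d$ on the resplit graph.
   Context: A BTB graph is a planar bipartite graph (black $B$, white $W$) in a disk or cactus with all black vertices of degree $3$. A TCD map is $T:W\to\mathbb{CP}^d$ such that for each black vertex $b$ the images of its three white neighbours are pairwise distinct and lie on a line $L_b$. Resplit $\mu_s$: at an internal white vertex $w_0$ of degree $2$ with black neighbours $b$ (other neighbours $w_1,w_2$) and $b'$ (other neighbours $w_3,w_4$), labelled so that $w_1,w_4$ share a face with $b,w_0,b'$ and $w_2,w_3$ share the other. It replaces $w_0,b,b'$ by $\tilde w_0$ and black vertices adjacent to $\{\tilde w_0,w_1,w_4\}$ and $\{\tilde w_0,w_2,w_3\}$. With lifts satisfying $V(w_0)=\alpha_1V(w_1)+\alpha_2V(w_2)=\alpha_3V(w_3)+\alpha_4V(w_4)$, the new point is $[\alpha_1V(w_1)-\alpha_4V(w_4)]$; other points are unchanged. It is defined when $T(w_1)\ne T(w_4)$ and $T(w_2)\ne T(w_3)$. Central projection from a point $U$ onto a complementary hyperplane $V\cong\mathbb{CP}^d$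 sends $P\ne U$ to $V\cap UP$. $\pi_U\circ\hat T$ is a TCD map iff $U$ is not any $\hat T(w)$ and lies on no line $L_b$. *)

theory Defs
  imports "HOL-Analysis.Analysis"
begin

text \<open>The ambient space
  CP^(d+1) is the set of one-dimensional complex subspaces of complex^'n,
  where CARD('n) = d+2.  All spans/dimensions are complex ones (vec.span,
  vec.dim come from the vector space structure given by scalar multiplication *s).\<close>

type_synonym 'n cvec = "complex ^ 'n"

definition cp_point :: "('n::finite) cvec set \<Rightarrow> bool" where
  "cp_point P \<longleftrightarrow> (\<exists>v. v \<noteq> 0 \<and> P = vec.span {v})"

definition cp_point_in :: "('n::finite) cvec set \<Rightarrow> ('n::finite) cvec set \<Rightarrow> bool" where
  "cp_point_in X P \<longleftrightarrow> cp_point P \<and> P \<subseteq> X"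

definition cp_line :: "('n::finite) cvec set \<Rightarrow> bool" where
  "cp_line L \<longleftrightarrow> vec.subspace L \<and> vec.dim L = 2"

definition nbrs :: "('b \<times> 'w) set \<Rightarrow> 'b \<Rightarrow> 'w set" where
  "nbrs E b = {w. (b, w) \<in> E}"

definition bnbrs :: "('b \<times> 'w) set \<Rightarrow> 'w \<Rightarrow> 'b set" where
  "bnbrs E w = {b. (b, w) \<in> E}"

text \<open>BTB graph (combinatorial part): finite bipartite graph, every black vertex of
  degree 3; Wbd is the set of boundary white vertices.\<close>
definition btb_graph :: "'b set \<Rightarrow> 'w set \<Rightarrow> 'w set \<Rightarrow> ('b \<times> 'w) set \<Rightarrow> bool" where
  "btb_graph B W Wbd E \<longleftrightarrow> finite B \<and> finite W \<and> Wbd \<subseteq> W \<and> E \<subseteq> B \<times> W \<and>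
     (\<forall>b\<in>B. card (nbrs E b) = 3)"

definition tcd_map_in :: "('n::finite) cvec set \<Rightarrow> 'b set \<Rightarrow> 'w set \<Rightarrow> ('b \<times> 'w) set
    \<Rightarrow> ('w \<Rightarrow> ('n::finite) cvec set) \<Rightarrow> bool" where
  "tcd_map_in X B W E T \<longleftrightarrow>
     (\<forall>w\<in>W. cp_point_in X (T w)) \<and>
     (\<forall>b\<in>B. (\<forall>w\<in>nbrs E b. \<forall>w'\<in>nbrs E b. w \<noteq> w' \<longrightarrow> T w \<noteq> T w') \<and>
             (\<exists>L. cp_line L \<and> L \<subseteq> X \<and> (\<forall>w\<in>nbrs E b. T w \<subseteq> L)))"

abbreviation tcd_map :: "'b set \<Rightarrow> 'w set \<Rightarrow> ('b \<times> 'w) set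
    \<Rightarrow> ('w \<Rightarrow> ('n::finite) cvec set) \<Rightarrow> bool" where
  "tcd_map \<equiv> tcd_map_in UNIV"

text \<open>Resplit data: w0 internal white of degree 2 with black neighbours b, b';
  b has other neighbours w1, w2, and b' has other neighbours w3, w4, labelled so that
  w1, w4 share a face with b, w0, b' (and w2, w3 the other one).\<close>
definition is_resplit :: "'b set \<Rightarrow> 'w set \<Rightarrow> 'w set \<Rightarrow> ('b \<times> 'w) set
    \<Rightarrow> 'w \<Rightarrow> 'b \<Rightarrow> 'b \<Rightarrow> 'w \<Rightarrow> 'w \<Rightarrow> 'w \<Rightarrow> 'w \<Rightarrow> bool" where
  "is_resplit B W Wbd E w0 b b' w1 w2 w3 w4 \<longleftrightarrow>
     w0 \<in> W \<and> w0 \<notin> Wbd \<and> b \<in> B \<and> b' \<in> B \<and> b \<noteq> b' \<and>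
     bnbrs E w0 = {b, b'} \<and>
     nbrs E b = {w0, w1, w2} \<and> nbrs E b' = {w0, w3, w4}"

text \<open>The resplit graph: the new white vertex keeps the name w0 and the new black
  vertices reuse the names b (adjacent to w0,w1,w4) and b' (adjacent to w0,w2,w3).\<close>
definition resplit_edges :: "('b \<times> 'w) set \<Rightarrow> 'w \<Rightarrow> 'b \<Rightarrow> 'b \<Rightarrow> 'w \<Rightarrow> 'w \<Rightarrow> 'w \<Rightarrow> 'w
    \<Rightarrow> ('b \<times> 'w) set" where
  "resplit_edges E w0 b b' w1 w2 w3 w4 =
     {e \<in> E. fst e \<noteq> b \<and> fst e \<noteq> b'} \<union>
     {(b, w0), (b, w1), (b, w4), (b', w0), (b', w2), (b', w3)}"

definition resplit_defined :: "('w \<Rightarrow> ('n::finite) cvec set) \<Rightarrow> 'w \<Rightarrow> 'w \<Rightarrow> 'w \<Rightarrow> 'w \<Rightarrow> bool" where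
  "resplit_defined T w1 w2 w3 w4 \<longleftrightarrow> T w1 \<noteq> T w4 \<and> T w2 \<noteq> T w3"

definition resplit_point :: "('w \<Rightarrow> ('n::finite) cvec set) \<Rightarrow> 'w \<Rightarrow> 'w \<Rightarrow> 'w \<Rightarrow> 'w \<Rightarrow> 'w
    \<Rightarrow> ('n::finite) cvec set" where
  "resplit_point T w0 w1 w2 w3 w4 = (SOME P. \<exists>v0 v1 v2 v3 v4 a1 a2 a3 a4.
      v0 \<noteq> 0 \<and> v1 \<noteq> 0 \<and> v2 \<noteq> 0 \<and> v3 \<noteq> 0 \<and> v4 \<noteq> 0 \<and>
      T w0 = vec.span {v0} \<and> T w1 = vec.span {v1} \<and> T w2 = vec.span {v2} \<and>
      T w3 = vec.span {v3} \<and> T w4 = vec.span {v4} \<and>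
      v0 = a1 *s v1 + a2 *s v2 \<and> v0 = a3 *s v3 + a4 *s v4 \<and>
      P = vec.span {a1 *s v1 - a4 *s v4})"

definition resplit_map :: "('w \<Rightarrow> ('n::finite) cvec set) \<Rightarrow> 'w \<Rightarrow> 'w \<Rightarrow> 'w \<Rightarrow> 'w \<Rightarrow> 'w
    \<Rightarrow> ('w \<Rightarrow> ('n::finite) cvec set)" where
  "resplit_map T w0 w1 w2 w3 w4 = T(w0 := resplit_point T w0 w1 w2 w3 w4)"

text \<open>Central projection from the point U onto the complementary hyperplane P(V):
  P \<mapsto> V \<inter> UP, where UP is the projective line through U and P.\<close>
definition complementary_hyperplane :: "('n::finite) cvec set \<Rightarrow> ('n::finite) cvec set \<Rightarrow> bool" where
  "complementary_hyperplane U V \<longleftrightarrow>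
     vec.subspace V \<and> vec.dim V = CARD('n) - 1 \<and> U \<inter> V = {0}"

definition cproj :: "('n::finite) cvec set \<Rightarrow> ('n::finite) cvec set \<Rightarrow> ('n::finite) cvec set \<Rightarrow> ('n::finite) cvec set" where
  "cproj U V P = V \<inter> vec.span (U \<union> P)"

end

theory Submission
  imports Defs
begin

type_synonym 'n cv = "complex ^ 'n"

lemma span_sing_mem: "y \<in> vec.span {x::'n::finite cv} \<longleftrightarrow> (\<exists>k. y = k *s x)"
  by (auto simp: vec.span_singleton)

lemma span_sing_eq:
  fixes p q :: "'n::finite cv"
  assumes "p \<noteq> 0" "vec.span {p} = vec.span {q}"
  shows "\<exists>c. c \<noteq> 0 \<and> p = c *s q"
proof -
  have "p \<in> vec.span {q}" using assms(2) vec.span_base[of p "{p}"] by auto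
  then obtain c where "p = c *s q" by (auto simp: span_sing_mem)
  with assms(1) show ?thesis by (intro exI[of _ c]) auto
qed

lemma span_scale_eq:
  fixes v :: "'n::finite cv"
  assumes "c \<noteq> 0" shows "vec.span {c *s v} = vec.span {v}"
proof -
  have "v = (1/c) *s (c *s v)" using assms by simp
  then have "v \<in> vec.span {c *s v}" by (metis span_sing_mem)
  moreover have "c *s v \<in> vec.span {v}" by (metis span_sing_mem)
  ultimately show ?thesis by (simp add: vec.span_eq)
qed

lemma indep2:
  fixes p q :: "'n::finite cv"
  assumes "p \<noteq> 0" "q \<noteq> 0" "vec.span {p} \<noteq> vec.span {q}" "a *s p + b *s q = 0"
  shows "a = 0 \<and> b = 0"
proof (rule ccontr)
  assume H: "\<not> (a = 0 \<and> b = 0)"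
  show False
  proof (cases "a = 0")
    case True
    then have "b \<noteq> 0" using H by auto
    moreover have "b *s q = 0" using assms(4) True by simp
    ultimately show False using assms(2) by simp
  next
    case False
    have "p = (- b / a) *s q"
    proof -
      have "a *s p = - (b *s q)" using assms(4) by (simp add: eq_neg_iff_add_eq_0)
      then have "(1/a) *s (a *s p) = (1/a) *s (- (b *s q))" by simp
      then show ?thesis using False by (simp add: divide_inverse mult.commute)
    qed
    moreover have "- b / a \<noteq> 0"
      using \<open>p = (- b / a) *s q\<close> assms(1) by auto
    ultimately show False using assms(3) span_scale_eq by metis
  qed
qed

lemma in_span2: "y \<in> vec.span {p, q::'n::finite cv} \<longleftrightarrow> (\<exists>s t. y = s *s p + t *s q)"
  apply (simp add: vec.span_breakdown_eq span_sing_mem)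
  by (metis add_diff_cancel_left' diff_add_cancel add.commute)

lemma line_lift:
  fixes p q r :: "'n::finite cv"
  assumes L: "cp_line L" and "vec.span {p} \<subseteq> L" "vec.span {q} \<subseteq> L" "vec.span {r} \<subseteq> L"
    and "q \<noteq> 0" "r \<noteq> 0" "vec.span {q} \<noteq> vec.span {r}"
  shows "\<exists>a b. p = a *s q + b *s r"
proof -
  have qr: "q \<notin> vec.span {r}"
  proof
    assume "q \<in> vec.span {r}"
    then obtain c where "q = c *s r" by (auto simp: span_sing_mem)
    then have "1 *s q + (-c) *s r = 0" by simp
    from indep2[OF assms(5,6,7) this] show False by simp
  qed
  then have "q \<noteq> r" using vec.span_base[of r "{r}"] by auto
  have ind: "vec.independent {q, r}"
    using qr assms(6) by (simp add: vec.independent_insert)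
  have sub: "{q, r} \<subseteq> L" using assms(3,4) vec.span_base by blast
  have "L \<subseteq> vec.span {q, r}"
    apply (rule vec.card_ge_dim_independent[OF sub ind])
    using L \<open>q \<noteq> r\<close> by (simp add: cp_line_def)
  moreover have "p \<in> L" using assms(2) vec.span_base by blast
  ultimately show ?thesis by (auto simp: in_span2)
qed

lemma decomp_exists:
  fixes u :: "'n::finite cv"
  assumes "u \<noteq> 0" "vec.subspace V" "vec.dim V = CARD('n) - 1" "vec.span {u} \<inter> V = {0}"
  shows "\<exists>a. z - a *s u \<in> V"
proof -
  have uV: "u \<notin> V" using assms(1,4) vec.span_base[of u "{u}"] by auto
  have sV: "vec.span V = V" using assms(2) by simp
  have uV': "u \<notin> vec.span V" by (subst sV) (rule uV)
  have "CARD('n) > 0" by simp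
  then have "vec.dim (insert u V) = CARD('n)"
    using uV' assms(3) by (simp add: vec.dim_insert)
  then have "vec.span (insert u V) = UNIV"
  proof -
    have "vec.dim (insert u V) = vec.dim (UNIV :: 'n cv set)"
      using vec_dim_card[where 'a=complex and 'n='n] \<open>vec.dim (insert u V) = CARD('n)\<close> by simp
    then show ?thesis using vec.dim_eq_full vec.dim_UNIV vec.dimension_def by metis
  qed
  then have "z \<in> vec.span (insert u V)" by simp
  then show ?thesis using sV by (simp add: vec.span_breakdown_eq)
qed

definition prj :: "'n::finite cv \<Rightarrow> 'n cv set \<Rightarrow> 'n cv \<Rightarrow> 'n cv" where
  "prj u V z = z - (SOME a. z - a *s u \<in> V) *s u"

context
  fixes u :: "'n::finite cv" and V :: "'n cv set"
  assumes u0: "u \<noteq> 0" and sub: "vec.subspace V" and dimV: "vec.dim V = CARD('n) - 1"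
    and cap: "vec.span {u} \<inter> V = {0}"
begin

lemma prj_char: "z - c *s u \<in> V \<Longrightarrow> prj u V z = z - c *s u"
proof -
  assume c: "z - c *s u \<in> V"
  define a where "a = (SOME a. z - a *s u \<in> V)"
  have a: "z - a *s u \<in> V" unfolding a_def by (rule someI_ex) (use c in blast)
  have "(z - c *s u) - (z - a *s u) \<in> V" by (rule vec.subspace_diff[OF sub c a])
  moreover have "(z - c *s u) - (z - a *s u) = (a - c) *s u" by (simp add: algebra_simps)
  ultimately have "(a - c) *s u \<in> V" by simp
  moreover have "(a - c) *s u \<in> vec.span {u}" by (rule vec.span_scale[OF vec.span_base[OF singletonI]])
  ultimately have "(a - c) *s u \<in> vec.span {u} \<inter> V" by blast
  then have "(a - c) *s u = 0" using cap by auto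
  then have "a = c" using u0 by simp
  then show ?thesis unfolding prj_def a_def[symmetric] by simp
qed

lemma prj_in: "prj u V z \<in> V"
proof -
  obtain a where "z - a *s u \<in> V" using decomp_exists[OF u0 sub dimV cap] by blast
  then show ?thesis using prj_char by simp
qed

lemma prj_decomp: "\<exists>c. z = c *s u + prj u V z"
proof -
  obtain a where "z - a *s u \<in> V" using decomp_exists[OF u0 sub dimV cap] by blast
  then show ?thesis using prj_char by (intro exI[of _ a]) simp
qed

lemma prj_lin: "prj u V (a *s y + b *s z) = a *s prj u V y + b *s prj u V z"
proof -
  obtain cy where cy: "y - cy *s u \<in> V" using decomp_exists[OF u0 sub dimV cap] by blast
  obtain cz where cz: "z - cz *s u \<in> V" using decomp_exists[OF u0 sub dimV cap] by blast
  have "a *s (y - cy *s u) + b *s (z - cz *s u) \<in> V"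
    by (intro vec.subspace_add[OF sub] vec.subspace_scale[OF sub] cy cz)
  moreover have "a *s (y - cy *s u) + b *s (z - cz *s u) = (a *s y + b *s z) - (a*cy + b*cz) *s u"
    by (simp add: algebra_simps)
  ultimately have "(a *s y + b *s z) - (a*cy + b*cz) *s u \<in> V" by metis
  then have "prj u V (a *s y + b *s z) = (a *s y + b *s z) - (a*cy + b*cz) *s u" by (rule prj_char)
  also have "\<dots> = a *s (y - cy *s u) + b *s (z - cz *s u)" by (simp add: algebra_simps)
  finally have "prj u V (a *s y + b *s z) = a *s (y - cy *s u) + b *s (z - cz *s u)" .
  then show ?thesis using prj_char[OF cy] prj_char[OF cz] by simp
qed

lemma cproj_span: "cproj (vec.span {u}) V (vec.span {x}) = vec.span {prj u V x}"
proof -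
  have e: "vec.span (vec.span {u} \<union> vec.span {x}) = vec.span {u, x}"
  proof -
    have "vec.span {u} \<subseteq> vec.span {u,x}" "vec.span {x} \<subseteq> vec.span {u,x}"
      by (rule vec.span_mono, blast)+
    moreover have "u \<in> vec.span (vec.span {u} \<union> vec.span {x})"
      "x \<in> vec.span (vec.span {u} \<union> vec.span {x})"
      by (auto intro!: vec.span_base)
    ultimately show ?thesis by (simp add: vec.span_eq)
  qed
  obtain c where c: "x = c *s u + prj u V x" using prj_decomp by blast
  show ?thesis unfolding cproj_def e
  proof (intro equalityI subsetI)
    fix y assume "y \<in> V \<inter> vec.span {u, x}"
    then obtain s t where y: "y \<in> V" "y = s *s u + t *s x" by (auto simp: in_span2)
    have "y - t *s prj u V x \<in> V" by (intro vec.subspace_diff[OF sub] vec.subspace_scale[OF sub] y(1) prj_in)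
    moreover have eq: "y - t *s prj u V x = (s + t * c) *s u"
    proof -
      have "y = s *s u + t *s (c *s u + prj u V x)" using y(2) c by simp
      then show ?thesis by (simp add: algebra_simps)
    qed
    moreover have "(s + t * c) *s u \<in> vec.span {u}" by (rule vec.span_scale[OF vec.span_base[OF singletonI]])
    ultimately have "y - t *s prj u V x \<in> vec.span {u} \<inter> V" by (simp only: eq IntI)
    then have "y = t *s prj u V x" using cap by auto
    then show "y \<in> vec.span {prj u V x}" by (auto simp: span_sing_mem)
  next
    fix y assume "y \<in> vec.span {prj u V x}"
    then obtain k where k: "y = k *s prj u V x" by (auto simp: span_sing_mem)
    have "y \<in> V" unfolding k by (intro vec.subspace_scale[OF sub] prj_in)
    moreover have "y = (- k * c) *s u + k *s x"
    proof -
      have "(- k * c) *s u + k *s x = (- k * c) *s u + k *s (c *s u + prj u V x)" using c by simp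
      then show ?thesis using k by (simp add: algebra_simps)
    qed
    moreover have "\<exists>s t. y = s *s u + t *s x" using \<open>y = (- k * c) *s u + k *s x\<close> by blast
    ultimately show "y \<in> V \<inter> vec.span {u, x}" by (simp only: in_span2 IntI)
  qed
qed

end


definition rpred where
  "rpred T w0 w1 w2 w3 w4 P \<longleftrightarrow> (\<exists>v0 v1 v2 v3 v4 a1 a2 a3 a4.
      v0 \<noteq> 0 \<and> v1 \<noteq> 0 \<and> v2 \<noteq> 0 \<and> v3 \<noteq> 0 \<and> v4 \<noteq> 0 \<and>
      T w0 = vec.span {v0} \<and> T w1 = vec.span {v1} \<and> T w2 = vec.span {v2} \<and>
      T w3 = vec.span {v3} \<and> T w4 = vec.span {v4} \<and>
      v0 = a1 *s v1 + a2 *s v2 \<and> v0 = a3 *s v3 + a4 *s v4 \<and>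
      P = vec.span {a1 *s v1 - a4 *s v4})"

lemma resplit_point_rpred: "resplit_point T w0 w1 w2 w3 w4 = (SOME P. rpred T w0 w1 w2 w3 w4 P)"
  unfolding resplit_point_def rpred_def by simp

lemma card3: "card {a, b, c} = 3 \<Longrightarrow> a \<noteq> b \<and> a \<noteq> c \<and> b \<noteq> c"
  by (auto simp: card_insert_if split: if_splits)

lemma cp_point_nz: "cp_point (vec.span {y::'n::finite cv}) \<Longrightarrow> y \<noteq> 0"
proof
  assume "cp_point (vec.span {y})" "y = 0"
  have z: "vec.span {0::'n cv} = {0}" using vec.span_insert_0[of "{}"] by simp
  from \<open>cp_point (vec.span {y})\<close> obtain v where v: "v \<noteq> 0" "vec.span {y} = vec.span {v}" unfolding cp_point_def by blast
  have "v \<in> vec.span {v}" by (rule vec.span_base) simp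
  with v(2) \<open>y = 0\<close> z have "v \<in> {0}" by metis
  with v(1) show False by simp
qed


theorem lemma5p3:
  fixes B :: "'b set" and W Wbd :: "'w set" and E :: "('b \<times> 'w) set"
    and T :: "'w \<Rightarrow> (complex ^ ('n::finite)) set"
    and U V :: "(complex ^ ('n::finite)) set"
    and w0 w1 w2 w3 w4 :: 'w and b b' :: 'b
  assumes "CARD('n) \<ge> 2"
    and "btb_graph B W Wbd E"
    and "tcd_map B W E T"
    and "is_resplit B W Wbd E w0 b b' w1 w2 w3 w4"
    and "cp_point U" and "complementary_hyperplane U V"
    and "tcd_map_in V B W E (\<lambda>w. cproj U V (T w))"
    and "resplit_defined (\<lambda>w. cproj U V (T w)) w1 w2 w3 w4"
    and "resplit_defined T w1 w2 w3 w4"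
    and "resplit_point T w0 w1 w2 w3 w4 \<noteq> U"
  shows "resplit_map (\<lambda>w. cproj U V (T w)) w0 w1 w2 w3 w4
         = (\<lambda>w. cproj U V (resplit_map T w0 w1 w2 w3 w4 w))"
proof -
  define T' where "T' = (\<lambda>w. cproj U V (T w))"
  obtain u where u0: "u \<noteq> 0" and Uu: "U = vec.span {u}" using assms(5) unfolding cp_point_def by blast
  have sub: "vec.subspace V" and dimV: "vec.dim V = CARD('n) - 1" and cap: "vec.span {u} \<inter> V = {0}"
    using assms(6) Uu unfolding complementary_hyperplane_def by auto
  note cs = cproj_span[OF u0 sub dimV cap, folded Uu]
  note pl = prj_lin[OF u0 sub dimV cap]
  have R: "w0 \<in> W" "b \<in> B" "b' \<in> B" "nbrs E b = {w0, w1, w2}" "nbrs E b' = {w0, w3, w4}"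
    using assms(4) unfolding is_resplit_def by auto
  have G: "E \<subseteq> B \<times> W" "card (nbrs E b) = 3" "card (nbrs E b') = 3"
    using assms(2) R(2,3) unfolding btb_graph_def by auto
  have c1: "w0 \<noteq> w1 \<and> w0 \<noteq> w2 \<and> w1 \<noteq> w2" by (rule card3) (use G(2) R(4) in simp)
  have c2: "w0 \<noteq> w3 \<and> w0 \<noteq> w4 \<and> w3 \<noteq> w4" by (rule card3) (use G(3) R(5) in simp)
  have d1: "w1 \<noteq> w2" "w0 \<noteq> w1" "w0 \<noteq> w2" using c1 by simp_all
  have d2: "w3 \<noteq> w4" "w0 \<noteq> w3" "w0 \<noteq> w4" using c2 by simp_all
  have inW: "w1 \<in> W" "w2 \<in> W" "w3 \<in> W" "w4 \<in> W"
    using G(1) R(4,5) unfolding nbrs_def by blast+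
  note inW = R(1) inW
  have TT: "(\<forall>w\<in>W. cp_point_in UNIV (T w))" using assms(3) unfolding tcd_map_in_def by (rule conjunct1)
  have TT2: "\<forall>b\<in>B. (\<forall>w\<in>nbrs E b. \<forall>w'\<in>nbrs E b. w \<noteq> w' \<longrightarrow> T w \<noteq> T w') \<and>
             (\<exists>L. cp_line L \<and> L \<subseteq> UNIV \<and> (\<forall>w\<in>nbrs E b. T w \<subseteq> L))"
    using assms(3) unfolding tcd_map_in_def by (rule conjunct2)
  have TV: "(\<forall>w\<in>W. cp_point_in V (T' w))" using assms(7) unfolding tcd_map_in_def T'_def by (rule conjunct1)
  have TV2: "\<forall>b\<in>B. (\<forall>w\<in>nbrs E b. \<forall>w'\<in>nbrs E b. w \<noteq> w' \<longrightarrow> T' w \<noteq> T' w') \<and>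
             (\<exists>L. cp_line L \<and> L \<subseteq> V \<and> (\<forall>w\<in>nbrs E b. T' w \<subseteq> L))"
    using assms(7) unfolding tcd_map_in_def T'_def by (rule conjunct2)
  have Tpt: "cp_point (T w)" if "w \<in> W" for w
    using bspec[OF TT that] unfolding cp_point_in_def by (rule conjunct1)
  have T'pt: "cp_point (T' w)" if "w \<in> W" for w
    using bspec[OF TV that] unfolding cp_point_in_def by (rule conjunct1)
  have projnz: "\<And>w v. w \<in> W \<Longrightarrow> T w = vec.span {v} \<Longrightarrow> T' w = vec.span {prj u V v} \<and> prj u V v \<noteq> 0"
  proof -
    fix w v assume "w \<in> W" "T w = vec.span {v}"
    then have e: "T' w = vec.span {prj u V v}" unfolding T'_def using cs by simp
    moreover have "prj u V v \<noteq> 0" apply (rule cp_point_nz) using T'pt[OF \<open>w \<in> W\<close>] e by simp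
    ultimately show "T' w = vec.span {prj u V v} \<and> prj u V v \<noteq> 0" by blast
  qed
  define lift where "lift w = (SOME v. v \<noteq> 0 \<and> T w = vec.span {v})" for w
  have lift: "lift w \<noteq> 0 \<and> T w = vec.span {lift w}" if "w \<in> W" for w
  proof -
    have "\<exists>v. v \<noteq> 0 \<and> T w = vec.span {v}" using Tpt[OF that] unfolding cp_point_def .
    then show ?thesis unfolding lift_def by (rule someI_ex)
  qed
  have tb: "(\<forall>w\<in>nbrs E b. \<forall>w'\<in>nbrs E b. w \<noteq> w' \<longrightarrow> T w \<noteq> T w') \<and>
             (\<exists>L. cp_line L \<and> L \<subseteq> UNIV \<and> (\<forall>w\<in>nbrs E b. T w \<subseteq> L))"
    by (rule bspec[OF TT2 R(2)])
  have tb': "(\<forall>w\<in>nbrs E b'. \<forall>w'\<in>nbrs E b'. w \<noteq> w' \<longrightarrow> T w \<noteq> T w') \<and>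
             (\<exists>L. cp_line L \<and> L \<subseteq> UNIV \<and> (\<forall>w\<in>nbrs E b'. T w \<subseteq> L))"
    by (rule bspec[OF TT2 R(3)])
  have nb: "w0 \<in> nbrs E b" "w1 \<in> nbrs E b" "w2 \<in> nbrs E b" "w0 \<in> nbrs E b'" "w3 \<in> nbrs E b'" "w4 \<in> nbrs E b'"
    by (simp_all add: R(4,5))
  have lp: "vec.span {lift w} \<subseteq> L" if "w \<in> W" "T w \<subseteq> L" for w L
    using lift[OF that(1)] that(2) by simp
  obtain a1 a2 where A12: "lift w0 = a1 *s lift w1 + a2 *s lift w2"
  proof -
    obtain L where L: "cp_line L" "\<forall>w\<in>nbrs E b. T w \<subseteq> L" using conjunct2[OF tb] by (elim exE conjE) (rule that)
    have "T w1 \<noteq> T w2" using conjunct1[OF tb] nb(2,3) d1(1) by (elim ballE impE) auto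
    then have ne: "vec.span {lift w1} \<noteq> vec.span {lift w2}" using lift[OF inW(2)] lift[OF inW(3)] by simp
    have s0: "vec.span {lift w0} \<subseteq> L" using lp[OF inW(1) bspec[OF L(2) nb(1)]] .
    have s1: "vec.span {lift w1} \<subseteq> L" using lp[OF inW(2) bspec[OF L(2) nb(2)]] .
    have s2: "vec.span {lift w2} \<subseteq> L" using lp[OF inW(3) bspec[OF L(2) nb(3)]] .
    have "\<exists>a b. lift w0 = a *s lift w1 + b *s lift w2"
      by (rule line_lift[OF L(1) s0 s1 s2 conjunct1[OF lift[OF inW(2)]] conjunct1[OF lift[OF inW(3)]] ne])
    then show ?thesis using that by blast
  qed
  obtain a3 a4 where A34: "lift w0 = a3 *s lift w3 + a4 *s lift w4"
  proof -
    obtain L where L: "cp_line L" "\<forall>w\<in>nbrs E b'. T w \<subseteq> L" using conjunct2[OF tb'] by (elim exE conjE) (rule that)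
    have "T w3 \<noteq> T w4" using conjunct1[OF tb'] nb(5,6) d2(1) by (elim ballE impE) auto
    then have ne: "vec.span {lift w3} \<noteq> vec.span {lift w4}" using lift[OF inW(4)] lift[OF inW(5)] by simp
    have s0: "vec.span {lift w0} \<subseteq> L" using lp[OF inW(1) bspec[OF L(2) nb(4)]] .
    have s1: "vec.span {lift w3} \<subseteq> L" using lp[OF inW(4) bspec[OF L(2) nb(5)]] .
    have s2: "vec.span {lift w4} \<subseteq> L" using lp[OF inW(5) bspec[OF L(2) nb(6)]] .
    have "\<exists>a b. lift w0 = a *s lift w3 + b *s lift w4"
      by (rule line_lift[OF L(1) s0 s1 s2 conjunct1[OF lift[OF inW(4)]] conjunct1[OF lift[OF inW(5)]] ne])
    then show ?thesis using that by blast
  qed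
  have "rpred T w0 w1 w2 w3 w4 (vec.span {a1 *s lift w1 - a4 *s lift w4})"
    unfolding rpred_def
    apply (rule exI[where x="lift w0"], rule exI[where x="lift w1"], rule exI[where x="lift w2"],
      rule exI[where x="lift w3"], rule exI[where x="lift w4"], rule exI[where x=a1], rule exI[where x=a2],
      rule exI[where x=a3], rule exI[where x=a4])
    apply (intro conjI)
    by (fact conjunct1[OF lift[OF inW(1)]] conjunct1[OF lift[OF inW(2)]] conjunct1[OF lift[OF inW(3)]]
      conjunct1[OF lift[OF inW(4)]] conjunct1[OF lift[OF inW(5)]]
      conjunct2[OF lift[OF inW(1)]] conjunct2[OF lift[OF inW(2)]] conjunct2[OF lift[OF inW(3)]]
      conjunct2[OF lift[OF inW(4)]] conjunct2[OF lift[OF inW(5)]] A12 A34 refl)+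
  then have "rpred T w0 w1 w2 w3 w4 (resplit_point T w0 w1 w2 w3 w4)"
    unfolding resplit_point_rpred by (rule someI)
  then obtain v0 v1 v2 v3 v4 c1 c2 c3 c4 where
    V: "v0 \<noteq> 0" "v1 \<noteq> 0" "v2 \<noteq> 0" "v3 \<noteq> 0" "v4 \<noteq> 0"
      "T w0 = vec.span {v0}" "T w1 = vec.span {v1}" "T w2 = vec.span {v2}"
      "T w3 = vec.span {v3}" "T w4 = vec.span {v4}"
      "v0 = c1 *s v1 + c2 *s v2" "v0 = c3 *s v3 + c4 *s v4"
      and RP: "resplit_point T w0 w1 w2 w3 w4 = vec.span {c1 *s v1 - c4 *s v4}"
    unfolding rpred_def by (elim exE conjE) (rule that)
  define x where "x = c1 *s v1 - c4 *s v4"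
  define p0 where "p0 = prj u V v0"
  define p1 where "p1 = prj u V v1"
  define p2 where "p2 = prj u V v2"
  define p3 where "p3 = prj u V v3"
  define p4 where "p4 = prj u V v4"
  have P0: "T' w0 = vec.span {p0}" "p0 \<noteq> 0" using projnz[OF inW(1) V(6)] p0_def by auto
  have P1: "T' w1 = vec.span {p1}" "p1 \<noteq> 0" using projnz[OF inW(2) V(7)] p1_def by auto
  have P2: "T' w2 = vec.span {p2}" "p2 \<noteq> 0" using projnz[OF inW(3) V(8)] p2_def by auto
  have P3: "T' w3 = vec.span {p3}" "p3 \<noteq> 0" using projnz[OF inW(4) V(9)] p3_def by auto
  have P4: "T' w4 = vec.span {p4}" "p4 \<noteq> 0" using projnz[OF inW(5) V(10)] p4_def by auto
  have px: "prj u V x = c1 *s p1 - c4 *s p4"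
    using pl[of c1 v1 "- c4" v4] unfolding x_def p1_def p4_def by simp
  have p0a: "p0 = c1 *s p1 + c2 *s p2" unfolding p0_def p1_def p2_def V(11) by (rule pl)
  have p0b: "p0 = c3 *s p3 + c4 *s p4" unfolding p0_def p3_def p4_def V(12) by (rule pl)
  have t'b: "T' w1 \<noteq> T' w2" "T' w3 \<noteq> T' w4"
  proof -
    show "T' w1 \<noteq> T' w2" using conjunct1[OF bspec[OF TV2 R(2)]] nb(2,3) d1(1) by (elim ballE impE) auto
    show "T' w3 \<noteq> T' w4" using conjunct1[OF bspec[OF TV2 R(3)]] nb(5,6) d2(1) by (elim ballE impE) auto
  qed
  have rhs: "cproj U V (resplit_point T w0 w1 w2 w3 w4) = vec.span {prj u V x}"
    unfolding RP x_def[symmetric] by (rule cs)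
  have lhs: "resplit_point T' w0 w1 w2 w3 w4 = vec.span {prj u V x}"
    unfolding resplit_point_rpred
  proof (rule some_equality)
    show "rpred T' w0 w1 w2 w3 w4 (vec.span {prj u V x})"
      unfolding rpred_def px
    apply (rule exI[where x="p0"], rule exI[where x="p1"], rule exI[where x="p2"],
      rule exI[where x="p3"], rule exI[where x="p4"], rule exI[where x=c1], rule exI[where x=c2],
      rule exI[where x=c3], rule exI[where x=c4])
      using P0 P1 P2 P3 P4 p0a p0b by simp
  next
    fix P assume "rpred T' w0 w1 w2 w3 w4 P"
    then obtain z0 z1 z2 z3 z4 e1 e2 e3 e4 where
      Z: "z0 \<noteq> 0" "z1 \<noteq> 0" "z2 \<noteq> 0" "z3 \<noteq> 0" "z4 \<noteq> 0"
      "T' w0 = vec.span {z0}" "T' w1 = vec.span {z1}" "T' w2 = vec.span {z2}"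
      "T' w3 = vec.span {z3}" "T' w4 = vec.span {z4}"
      "z0 = e1 *s z1 + e2 *s z2" "z0 = e3 *s z3 + e4 *s z4"
      and PP: "P = vec.span {e1 *s z1 - e4 *s z4}"
      unfolding rpred_def by (elim exE conjE) (rule that)
    obtain k0 where k0: "k0 \<noteq> 0" "z0 = k0 *s p0" using span_sing_eq[OF Z(1) trans[OF Z(6)[symmetric] P0(1)]] by blast
    obtain k1 where k1: "k1 \<noteq> 0" "z1 = k1 *s p1" using span_sing_eq[OF Z(2) trans[OF Z(7)[symmetric] P1(1)]] by blast
    obtain k2 where k2: "k2 \<noteq> 0" "z2 = k2 *s p2" using span_sing_eq[OF Z(3) trans[OF Z(8)[symmetric] P2(1)]] by blast
    obtain k3 where k3: "k3 \<noteq> 0" "z3 = k3 *s p3" using span_sing_eq[OF Z(4) trans[OF Z(9)[symmetric] P3(1)]] by blast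
    obtain k4 where k4: "k4 \<noteq> 0" "z4 = k4 *s p4" using span_sing_eq[OF Z(5) trans[OF Z(10)[symmetric] P4(1)]] by blast
    have "(k0 * c1 - e1 * k1) *s p1 + (k0 * c2 - e2 * k2) *s p2 = k0 *s p0 - z0"
      using Z(11) k1 k2 p0a by (simp add: algebra_simps)
    then have "(k0 * c1 - e1 * k1) *s p1 + (k0 * c2 - e2 * k2) *s p2 = 0" using k0 by simp
    moreover have "vec.span {p1} \<noteq> vec.span {p2}" using t'b(1) P1(1) P2(1) by simp
    ultimately have q1: "k0 * c1 = e1 * k1" using indep2[OF P1(2) P2(2)] by (metis eq_iff_diff_eq_0)
    have "(k0 * c3 - e3 * k3) *s p3 + (k0 * c4 - e4 * k4) *s p4 = k0 *s p0 - z0"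
      using Z(12) k3 k4 p0b by (simp add: algebra_simps)
    then have "(k0 * c3 - e3 * k3) *s p3 + (k0 * c4 - e4 * k4) *s p4 = 0" using k0 by simp
    moreover have "vec.span {p3} \<noteq> vec.span {p4}" using t'b(2) P3(1) P4(1) by simp
    ultimately have q4: "k0 * c4 = e4 * k4" using indep2[OF P3(2) P4(2)] by (metis eq_iff_diff_eq_0)
    have "e1 *s z1 - e4 *s z4 = k0 *s prj u V x"
      unfolding px k1(2) k4(2) using q1 q4 by (simp add: algebra_simps)
    then show "P = vec.span {prj u V x}" using PP span_scale_eq[OF k0(1)] by simp
  qed
  show ?thesis
    unfolding resplit_map_def
  proof (rule ext)
    fix w
    show "((\<lambda>w. cproj U V (T w))(w0 := resplit_point (\<lambda>w. cproj U V (T w)) w0 w1 w2 w3 w4)) w =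
      cproj U V ((T(w0 := resplit_point T w0 w1 w2 w3 w4)) w)"
      using lhs[unfolded T'_def] rhs by (cases "w = w0") simp_all
  qed
qed

end
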